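(* Suppose an $N\times N$ Hadamard matrix exists for some positive integer $N$. Then for every integer $k\ge 0$ and every positive integer $M\le 2^kN$, there exists an equal norm tight integer frame (ENTIF) with $2^kN$ elements in $\mathcal{H}_M$.
   Context: An $N\times N$ Hadamard matrix is a matrix $H$ with all entries in $\{1,-1\}$ satisfying $H^TH=N I_N$. $\mathcal{H}_M$ is the real $M$-dimensional Hilbert space, identified with $\mathbb{R}^M$ via a fixed orthonormal basis. An ENTIF with $N$ elements in $\mathcal{H}_M$ is a family of $N$ vectors with integer coordinates that forms a frame for $\mathbb{R}^M$ which is tight and equal norm; equivalently, an $M\times N$ integer matrix $A$ of rank $M$ with $AA^T=\lambda I_M$ for some $\lambda>0$ and all columns of the same Euclidean norm. *)

theory Defs
  imports Complex_Main
begin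

text \<open>Matrices of varying size are represented as functions nat => nat => int,
  only entries with indices inside the stated bounds matter.\<close>

definition hadamard :: "nat \<Rightarrow> (nat \<Rightarrow> nat \<Rightarrow> int) \<Rightarrow> bool" where
  "hadamard N H \<longleftrightarrow>
     (\<forall>i<N. \<forall>j<N. H i j = 1 \<or> H i j = -1) \<and>
     (\<forall>i<N. \<forall>j<N. (\<Sum>l<N. H l i * H l j) = (if i = j then int N else 0))"

text \<open>An ENTIF with N elements in H_M: an M x N integer matrix A (columns are the
  frame vectors) of rank M with A A^T = lambda I_M for some lambda > 0 and all
  columns of the same Euclidean norm. Rank M is expressed as linear independence
  of the M rows over the reals.\<close>

definition entif :: "nat \<Rightarrow> nat \<Rightarrow> (nat \<Rightarrow> nat \<Rightarrow> int) \<Rightarrow> bool" where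
  "entif M N A \<longleftrightarrow>
     (\<forall>c :: nat \<Rightarrow> real. (\<forall>j<N. (\<Sum>i<M. c i * real_of_int (A i j)) = 0) \<longrightarrow> (\<forall>i<M. c i = 0)) \<and>
     (\<exists>lam::int. lam > 0 \<and> (\<forall>i<M. \<forall>i'<M. (\<Sum>j<N. A i j * A i' j) = (if i = i' then lam else 0))) \<and>
     (\<forall>j<N. \<forall>j'<N. (\<Sum>i<M. (A i j)^2) = (\<Sum>i<M. (A i j')^2))"

end

theory Submission
  imports Defs
begin

lemma sum_split2:
  fixes f :: "nat \<Rightarrow> 'a::comm_monoid_add"
  shows "(\<Sum>l<2*n. f l) = (\<Sum>l<n. f l) + (\<Sum>l<n. f (l+n))"
proof -
  have "{..<2*n} = {..<n} \<union> {n..<n+n}" by auto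
  hence "(\<Sum>l<2*n. f l) = (\<Sum>l<n. f l) + (\<Sum>l\<in>{n..<n+n}. f l)"
    by (simp add: sum.union_disjoint ivl_disj_int)
  also have "(\<Sum>l\<in>{n..<n+n}. f l) = (\<Sum>l<n. f (l+n))"
    using sum.shift_bounds_nat_ivl[of f 0 n n] by (simp add: lessThan_atLeast0 add.commute)
  finally show ?thesis .
qed

definition dbl :: "nat \<Rightarrow> (nat \<Rightarrow> nat \<Rightarrow> int) \<Rightarrow> nat \<Rightarrow> nat \<Rightarrow> int" where
  "dbl n H i j = (if i < n then (if j < n then H i j else H i (j - n))
                  else (if j < n then H (i - n) j else - H (i - n) (j - n)))"

lemma dbl_hadamard:
  assumes h: "hadamard n H"
  shows "hadamard (2*n) (dbl n H)"
  unfolding hadamard_def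
proof (intro conjI allI impI)
  have e: "\<And>i j. i<n \<Longrightarrow> j<n \<Longrightarrow> H i j = 1 \<or> H i j = -1"
    and o: "\<And>i j. i<n \<Longrightarrow> j<n \<Longrightarrow> (\<Sum>l<n. H l i * H l j) = (if i = j then int n else 0)"
    using h unfolding hadamard_def by auto
  fix i j assume i: "i < 2*n" and j: "j < 2*n"
  show "dbl n H i j = 1 \<or> dbl n H i j = -1"
    using e[of i j] e[of "i-n" j] e[of i "j-n"] e[of "i-n" "j-n"] i j
    unfolding dbl_def by auto
  define i' where "i' = (if i < n then i else i - n)"
  define j' where "j' = (if j < n then j else j - n)"
  have i': "i' < n" and j': "j' < n" using i j by (auto simp: i'_def j'_def)
  have A: "(\<Sum>l<n. dbl n H l i * dbl n H l j) = (\<Sum>l<n. H l i' * H l j')"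
    by (rule sum.cong) (auto simp: dbl_def i'_def j'_def)
  have B: "(\<Sum>l<n. dbl n H (l+n) i * dbl n H (l+n) j) =
       (if (i < n) = (j < n) then 1 else -1) * (\<Sum>l<n. H l i' * H l j')"
    by (auto simp: dbl_def i'_def j'_def sum_distrib_left sum_negf intro!: sum.cong)
  show "(\<Sum>l<2*n. dbl n H l i * dbl n H l j) = (if i = j then int (2*n) else 0)"
    unfolding sum_split2 A B o[OF i' j']
    using i j by (auto simp: i'_def j'_def)
qed

lemma hadamard_pow:
  assumes "hadamard N H"
  shows "\<exists>H'. hadamard (2^k*N) H'"
proof (induction k)
  case 0 then show ?case using assms by auto
next
  case (Suc k)
  then obtain H' where "hadamard (2^k*N) H'" by auto
  from dbl_hadamard[OF this] show ?case by (auto simp: mult.assoc)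
qed

lemma hadamard_entif:
  assumes h: "hadamard n H" and M: "0 < M" "M \<le> n"
  shows "entif M n (\<lambda>i j. H j i)"
  unfolding entif_def
proof (intro conjI)
  have e: "\<And>i j. i<n \<Longrightarrow> j<n \<Longrightarrow> H i j = 1 \<or> H i j = -1"
    and o: "\<And>i j. i<n \<Longrightarrow> j<n \<Longrightarrow> (\<Sum>l<n. H l i * H l j) = (if i = j then int n else 0)"
    using h unfolding hadamard_def by auto
  have sq: "\<And>i j. i<n \<Longrightarrow> j<n \<Longrightarrow> (H i j)^2 = 1"
    using e by (metis power2_minus one_power2)
  have pos: "n > 0" using M by auto
  show "\<forall>c :: nat \<Rightarrow> real. (\<forall>j<n. (\<Sum>i<M. c i * real_of_int (H j i)) = 0) \<longrightarrow> (\<forall>i<M. c i = 0)"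
  proof (intro allI impI)
    fix c :: "nat \<Rightarrow> real" and i0
    assume z: "\<forall>j<n. (\<Sum>i<M. c i * real_of_int (H j i)) = 0" and i0: "i0 < M"
    have "0 = (\<Sum>j<n. (\<Sum>i<M. c i * real_of_int (H j i)) * real_of_int (H j i0))"
      using z by simp
    also have "\<dots> = (\<Sum>i<M. c i * real_of_int (\<Sum>j<n. H j i * H j i0))"
      by (simp add: sum_distrib_left sum_distrib_right mult.assoc sum.swap[of _ "{..<n}"])
    also have "\<dots> = (\<Sum>i<M. if i = i0 then c i * real n else 0)"
      by (rule sum.cong) (use M i0 o in auto)
    also have "\<dots> = c i0 * real n" using i0 by simp
    finally show "c i0 = 0" using pos by simp
  qed
  show "\<exists>lam::int. lam > 0 \<and> (\<forall>i<M. \<forall>i'<M. (\<Sum>j<n. H j i * H j i') = (if i = i' then lam else 0))"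
    using o M pos by (intro exI[of _ "int n"]) auto
  show "\<forall>j<n. \<forall>j'<n. (\<Sum>i<M. (H j i)^2) = (\<Sum>i<M. (H j' i)^2)"
    using sq M by simp
qed

theorem theorem3p5:
  fixes N :: nat and H :: "nat \<Rightarrow> nat \<Rightarrow> int"
  assumes "N > 0" and "hadamard N H"
  shows "\<forall>k M. 0 < M \<and> M \<le> 2^k * N \<longrightarrow> (\<exists>A. entif M (2^k * N) A)"
proof (intro allI impI)
  fix k M assume a: "0 < M \<and> M \<le> 2^k * N"
  obtain H' where "hadamard (2^k*N) H'" using hadamard_pow[OF assms(2)] by auto
  from hadamard_entif[OF this] a show "\<exists>A. entif M (2^k * N) A" by blast
qed

end
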